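(* Let $N\ge2$, $\Omega=\mathbb{R}^{N-1}\times(0,\infty)$, $\psi\in L^p(\partial\Omega)$ with $p\in[1,\infty)$, and $T>0$. For $\delta>0$, $k\ge0$ let $v_{\delta,k}(x,t):=\int_{\partial\Omega}\Phi_{\delta,k}(x,y,t)\psi(y)\,d\sigma(y)$ and $w_\delta(x,t):=\int_{\partial\Omega}P(x'-y',x_N+t/\delta)\psi(y)\,d\sigma(y)$. Then \[\sup_{(x,t)\in\Omega\times(T,\infty)}|v_{\delta,k}(x,t)|=O(\delta^{\frac{N-1}p})\ \text{as }\delta\to0^+\text{ for each fixed }k>0,\qquad \sup_{(x,t)\in\Omega\times(T,\infty)}|w_\delta(x,t)|=O(\delta^{\frac{N-1}p})\ \text{as }\delta\to0^+,\] and, for each fixed $\delta>0$, $\sup_{(x,t)\in\Omega\times(T,\infty)}|v_{\delta,k}(x,t)|=O(k^{-\frac{N-1}{2p}})$ as $k\to\infty$.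
   Context: $x=(x',x_N)$, $\partial\Omega\cong\mathbb{R}^{N-1}$ with surface measure $d\sigma$. $\Gamma_d(x,t)=(4\pi t)^{-d/2}e^{-|x|^2/(4t)}$, $\partial_\xi\Gamma_1$ is the spatial derivative of $\Gamma_1$. $\Phi_{\delta,k}(x,y,t):=-2\int_0^\infty\Gamma_{N-1}(x'-y',\frac k\delta t+\tau)\partial_\xi\Gamma_1(x_N+y_N+\frac t\delta,\tau)d\tau$ (the fundamental solution of the Laplace equation in $\Omega$ with boundary condition $\delta\partial_tu-k\Delta'u-\partial_{x_N}u=0$). $P(x)=c_Nx_N|x|^{-N}$, $c_N=\pi^{-N/2}\Gamma(N/2)$. *)

theory Defs
  imports "HOL-Analysis.Analysis"
begin

text \<open>Points of \<Omega> = R^(N-1) x (0,inf) are pairs (x', x_N) with x' :: real^'n and x_N > 0,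
  where N - 1 = CARD('n).  The boundary \<partial>\<Omega> is identified with real^'n, with surface
  measure the Lebesgue measure lborel on real^'n.\<close>

definition heat_kernel :: "real^'n \<Rightarrow> real \<Rightarrow> real" where
  "heat_kernel x t = (4 * pi * t) powr (- real CARD('n) / 2) * exp (- (norm x)\<^sup>2 / (4 * t))"

definition heat_kernel1 :: "real \<Rightarrow> real \<Rightarrow> real" where
  "heat_kernel1 \<xi> t = (4 * pi * t) powr (- 1 / 2) * exp (- \<xi>\<^sup>2 / (4 * t))"

definition dheat_kernel1 :: "real \<Rightarrow> real \<Rightarrow> real" where
  "dheat_kernel1 \<xi> t = deriv (\<lambda>s. heat_kernel1 s t) \<xi>"

definition Phi :: "real \<Rightarrow> real \<Rightarrow> real^'n \<Rightarrow> real \<Rightarrow> real^'n \<Rightarrow> real \<Rightarrow> real \<Rightarrow> real" where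
  "Phi \<delta> k x' xN y' yN t =
     - 2 * (LINT \<tau>:{0<..}|lborel.
              heat_kernel (x' - y') (k / \<delta> * t + \<tau>) * dheat_kernel1 (xN + yN + t / \<delta>) \<tau>)"

definition cN :: "'n::finite itself \<Rightarrow> real" where
  "cN _ = pi powr (- (real CARD('n) + 1) / 2) * Gamma ((real CARD('n) + 1) / 2)"

definition poisson :: "real^'n \<Rightarrow> real \<Rightarrow> real" where
  "poisson z' zN = cN TYPE('n) * zN / (sqrt ((norm z')\<^sup>2 + zN\<^sup>2)) ^ (CARD('n) + 1)"

definition v_fun :: "real \<Rightarrow> real \<Rightarrow> (real^'n \<Rightarrow> real) \<Rightarrow> real^'n \<Rightarrow> real \<Rightarrow> real \<Rightarrow> real" where
  "v_fun \<delta> k \<psi> x' xN t = (\<integral>y'. Phi \<delta> k x' xN y' 0 t * \<psi> y' \<partial>lborel)"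

definition w_fun :: "real \<Rightarrow> (real^'n \<Rightarrow> real) \<Rightarrow> real^'n \<Rightarrow> real \<Rightarrow> real \<Rightarrow> real" where
  "w_fun \<delta> \<psi> x' xN t = (\<integral>y'. poisson (x' - y') (xN + t / \<delta>) * \<psi> y' \<partial>lborel)"

end

theory Submission
  imports Defs "HOL-Probability.Probability"
begin


lemma norm_sq_basis: "(norm (z::real^'n))\<^sup>2 = (\<Sum>b\<in>Basis. (z \<bullet> b)\<^sup>2)"
proof -
  have "(norm z)\<^sup>2 = z \<bullet> z" by (rule dot_square_norm[symmetric])
  also have "\<dots> = (\<Sum>b\<in>Basis. (z \<bullet> b) * (z \<bullet> b))" by (rule euclidean_inner)
  finally show ?thesis by (simp only: power2_eq_square)
qed

lemma heat_kernel_prod: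
  fixes x' y' :: "real^'n" assumes s: "s > 0"
  shows "heat_kernel (x' - y') s = (\<Prod>b\<in>Basis. normal_density (x' \<bullet> b) (sqrt (2 * s)) (y' \<bullet> b))"
proof -
  have "(\<Prod>b\<in>(Basis::(real^'n) set). normal_density (x' \<bullet> b) (sqrt (2 * s)) (y' \<bullet> b))
     = (\<Prod>b\<in>(Basis::(real^'n) set). (4 * pi * s) powr (-1/2) * exp (- ((x'-y') \<bullet> b)\<^sup>2 / (4 * s)))"
  proof (rule prod.cong[OF refl])
    fix b :: "real^'n"
    have sq: "(sqrt (2 * s))\<^sup>2 = 2 * s" using s by simp
    have "1 / sqrt (2 * pi * (sqrt (2 * s))\<^sup>2) = 1 / sqrt (4 * pi * s)"
      by (simp add: sq)
    also have "\<dots> = (4 * pi * s) powr (-1/2)"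
      using s by (simp add: powr_minus_divide powr_half_sqrt)
    finally have "1 / sqrt (2 * pi * (sqrt (2 * s))\<^sup>2) = (4 * pi * s) powr (-1/2)" .
    moreover have "(y' \<bullet> b - x' \<bullet> b)\<^sup>2 / (2 * (sqrt (2 * s))\<^sup>2) = ((x'-y') \<bullet> b)\<^sup>2 / (4 * s)"
      using s by (simp add: inner_diff_left power2_commute)
    ultimately show "normal_density (x' \<bullet> b) (sqrt (2 * s)) (y' \<bullet> b) = (4 * pi * s) powr (-1/2) * exp (- ((x'-y') \<bullet> b)\<^sup>2 / (4 * s))"
      unfolding normal_density_def by simp
  qed
  also have "\<dots> = ((4 * pi * s) powr (-1/2)) ^ CARD('n) * exp (\<Sum>b\<in>(Basis::(real^'n) set). - ((x'-y') \<bullet> b)\<^sup>2 / (4 * s))"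
    by (simp add: prod.distrib exp_sum)
  also have "\<dots> = heat_kernel (x' - y') s"
    unfolding heat_kernel_def norm_sq_basis[of "x'-y'"]
    using s by (simp add: powr_realpow[symmetric] powr_powr sum_negf sum_divide_distrib)
  finally show ?thesis by simp
qed

lemma heat_kernel_mass:
  fixes x' :: "real^'n" assumes s: "s > 0"
  shows "(\<integral>\<^sup>+y'. ennreal (heat_kernel (x' - y') s) \<partial>lborel) = 1"
proof -
  have "(\<integral>\<^sup>+y'. ennreal (heat_kernel (x' - y') s) \<partial>lborel)
      = (\<integral>\<^sup>+y'. (\<Prod>b\<in>Basis. ennreal (normal_density (x' \<bullet> b) (sqrt (2 * s)) (y' \<bullet> b))) \<partial>lborel)"
    using s by (simp add: heat_kernel_prod prod_ennreal)
  also have "\<dots> = (\<Prod>b\<in>(Basis::(real^'n) set). (\<integral>\<^sup>+u. ennreal (normal_density (x' \<bullet> b) (sqrt (2 * s)) u) \<partial>lborel))"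
    by (rule nn_integral_lborel_prod) auto
  also have "\<dots> = 1"
    using s by (subst nn_integral_eq_integral) (auto intro!: prod.neutral)
  finally show ?thesis .
qed


lemma tail_powr:
  fixes c q :: real assumes c: "c > 0" and q: "q > 1"
  shows "(\<integral>\<^sup>+v. ennreal (indicator {c..} v * v powr (-q)) \<partial>lborel) = ennreal (c powr (1-q) / (q-1))"
proof -
  have "((\<lambda>x. x powr (-q)) has_integral -(c powr (-q+1)) / (-q+1)) {c..}"
    using has_integral_powr_to_inf[of "-q" c] c q by simp
  from nn_integral_has_integral_lebesgue[OF _ this]
  have "(\<integral>\<^sup>+v. ennreal (indicator {c..} v * v powr (-q)) \<partial>lborel) = ennreal (-(c powr (-q+1)) / (-q+1))"
    by simp
  also have "-(c powr (-q+1)) / (-q+1) = c powr (1-q) / (q-1)"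
    using q by (simp add: field_simps)
  finally show ?thesis .
qed

lemma small_bound:
  fixes q :: real assumes q: "q > 0"
  shows "\<exists>B\<ge>0. \<forall>v. 0 < v \<longrightarrow> v \<le> 1 \<longrightarrow> v powr (-q) * exp (- 1 / (4 * v)) \<le> B"
proof -
  define m where "m = nat \<lceil>q\<rceil>"
  have m0: "m > 0" using q by (simp add: m_def)
  have qm: "q \<le> real m" using q by (simp add: m_def)
  show ?thesis
  proof (intro exI[of _ "(4 * real m) ^ m"] conjI allI impI)
    show "0 \<le> (4 * real m) ^ m" by simp
    fix v :: real assume v: "0 < v" "v \<le> 1"
    have "v powr (-q) = (1/v) powr q" using v by (simp add: powr_minus_divide powr_divide)
    also have "\<dots> \<le> (1/v) powr real m" using v qm by (intro powr_mono) auto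
    also have "\<dots> = (1/v) ^ m" using v by (simp add: powr_realpow)
    finally have A: "v powr (-q) \<le> (1/v) ^ m" .
    have h1: "0 \<le> 1/(4 * v)" using v by simp
    have h2: "- real m \<le> 1/(4 * v)" using h1 by linarith
    have "(1 + (1/(4 * v)) / real m) ^ m \<le> exp (1/(4 * v))"
      by (rule exp_ge_one_plus_x_over_n_power_n[OF h2 m0])
    moreover have "(1/(4 * v * real m)) ^ m \<le> (1 + (1/(4 * v)) / real m) ^ m"
      using v m0 by (intro power_mono) (auto simp: field_simps)
    ultimately have "(1/(4 * v * real m)) ^ m \<le> exp (1/(4 * v))" by linarith
    note X = this
    have Xpos: "0 < (1/(4 * v * real m)) ^ m" using v m0 by simp
    have "exp (- 1 / (4 * v)) = 1 / exp (1/(4 * v))" by (simp add: exp_minus inverse_eq_divide)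
    also have "\<dots> \<le> 1 / (1/(4 * v * real m)) ^ m"
      by (rule divide_left_mono[OF X]) (use Xpos in auto)
    also have "\<dots> = (4 * v * real m) ^ m" by (simp add: power_one_over)
    finally have E: "exp (- 1 / (4 * v)) \<le> (4 * v * real m) ^ m" .
    have "v powr (-q) * exp (- 1 / (4 * v)) \<le> (1/v) ^ m * (4 * v * real m) ^ m"
      by (rule mult_mono[OF A E]) (use v in auto)
    also have "\<dots> = ((1/v) * (4 * v * real m)) ^ m" by (rule power_mult_distrib[symmetric])
    also have "(1/v) * (4 * v * real m) = 4 * real m" using v by simp
    finally show "v powr (-q) * exp (- 1 / (4 * v)) \<le> (4 * real m) ^ m" .
  qed
qed

lemma t1: fixes a q :: real assumes a: "a > 0" shows "(a\<^sup>2) powr (-q) = a powr (-2 * q)"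
proof -
  have a2: "a\<^sup>2 = a powr 2" using a by (simp add: powr_realpow)
  have "(a powr 2) powr (-q) = a powr (2 * (-q))" by (rule powr_powr)
  then show ?thesis using a2 by simp
qed
lemma t2: fixes a v :: real assumes a: "a > 0" and v: "v > 0" shows "- a\<^sup>2 / (4 * (a\<^sup>2 * v)) = - 1 / (4 * v)"
  using a v by (simp add: field_simps power2_eq_square)
lemma t3: fixes a q :: real assumes a: "a > 0" shows "a\<^sup>2 * a powr (-2 * q) = a powr (2 - 2 * q)"
proof -
  have a2: "a\<^sup>2 = a powr 2" using a by (simp add: powr_realpow)
  have "a powr 2 * a powr (-2 * q) = a powr (2 + (-2 * q))" by (rule powr_add[symmetric])
  then show ?thesis using a2 by simp
qed

definition Jq :: "real \<Rightarrow> real \<Rightarrow> ennreal" where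
  "Jq q a = (\<integral>\<^sup>+\<tau>. ennreal (indicator {0<..} \<tau> * \<tau> powr (-q) * exp (- a\<^sup>2 / (4 * \<tau>))) \<partial>lborel)"

lemma Jq_scale:
  assumes a: "a > 0"
  shows "Jq q a = ennreal (a powr (2 - 2 * q)) * Jq q 1"
proof -
  have "Jq q a = ennreal (\<bar>a\<^sup>2\<bar>) * (\<integral>\<^sup>+v. ennreal (indicator {0<..} (0 + a\<^sup>2 * v) * (0 + a\<^sup>2 * v) powr (-q)
       * exp (- a\<^sup>2 / (4 * (0 + a\<^sup>2 * v)))) \<partial>lborel)"
    unfolding Jq_def using a by (intro nn_integral_real_affine) auto
  also have "\<dots> = ennreal (a\<^sup>2) * (\<integral>\<^sup>+v. ennreal (a powr (-2 * q)) * ennreal (indicator {0<..} v * v powr (-q)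
       * exp (- 1\<^sup>2 / (4 * v))) \<partial>lborel)"
  proof -
    have "\<And>v. ennreal (indicator {0<..} (0 + a\<^sup>2 * v) * (0 + a\<^sup>2 * v) powr (-q)
       * exp (- a\<^sup>2 / (4 * (0 + a\<^sup>2 * v)))) = ennreal (a powr (-2 * q)) * ennreal (indicator {0<..} v * v powr (-q)
       * exp (- 1\<^sup>2 / (4 * v)))"
    proof -
      fix v :: real
      have R: "indicator {0<..} (0 + a\<^sup>2 * v) * (0 + a\<^sup>2 * v) powr (-q)
       * exp (- a\<^sup>2 / (4 * (0 + a\<^sup>2 * v))) = a powr (-2 * q) * (indicator {0<..} v * v powr (-q)
       * exp (- 1\<^sup>2 / (4 * v)))"
      proof (cases "v > 0")
        case True
        have "(a\<^sup>2 * v) powr (-q) = (a\<^sup>2) powr (-q) * v powr (-q)"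
          using a True by (simp add: powr_mult)
        then have "(a\<^sup>2 * v) powr (-q) = a powr (-2 * q) * v powr (-q)" using t1[OF a] by simp
        moreover have "- a\<^sup>2 / (4 * (a\<^sup>2 * v)) = - 1 / (4 * v)" using t2[OF a True] .
        moreover have "0 < a\<^sup>2 * v" using a True by simp
        ultimately show ?thesis using True by simp
      next
        case False
        then have "\<not> 0 < a\<^sup>2 * v" using a by (simp add: zero_less_mult_iff)
        then show ?thesis using False by simp
      qed
      show "?thesis v" unfolding R by (rule ennreal_mult) auto
    qed
    then show ?thesis by simp
  qed
  also have "\<dots> = ennreal (a\<^sup>2) * (ennreal (a powr (-2 * q)) * Jq q 1)"
    unfolding Jq_def by (subst nn_integral_cmult) auto
  also have "\<dots> = ennreal (a powr (2 - 2 * q)) * Jq q 1"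
  proof -
    have "a\<^sup>2 * a powr (-2 * q) = a powr (2 - 2 * q)" by (rule t3[OF a])
    then have "ennreal (a\<^sup>2) * ennreal (a powr (-2 * q)) = ennreal (a powr (2 - 2 * q))"
      by (subst ennreal_mult[symmetric]) auto
    then show ?thesis by (simp only: mult.assoc[symmetric])
  qed
  finally show ?thesis .
qed

lemma Jq_one_finite:
  assumes q: "q > 1"
  shows "\<exists>C\<ge>0. Jq q 1 \<le> ennreal C"
proof -
  obtain B where B: "B \<ge> 0" "\<And>v. 0 < v \<Longrightarrow> v \<le> 1 \<Longrightarrow> v powr (-q) * exp (- 1 / (4 * v)) \<le> B"
    using small_bound[of q] q by auto
  have pt: "ennreal (indicator {0<..} v * v powr (-q) * exp (- 1\<^sup>2 / (4 * v)))
     \<le> ennreal (B * indicator {0..1} v) + ennreal (indicator {1..} v * v powr (-q))" for v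
  proof (cases "v > 0")
    case True
    show ?thesis
    proof (cases "v \<le> 1")
      case True
      then show ?thesis using B(2)[of v] \<open>v>0\<close> by (intro add_increasing2) (auto simp: indicator_def intro!: ennreal_leI)
    next
      case False
      then have "exp (- 1 / (4 * v)) \<le> 1" using True by simp
      then have "v powr (-q) * exp (- 1 / (4 * v)) \<le> v powr (-q)"
        by (simp add: mult_left_le)
      then show ?thesis using False True
        by (intro add_increasing) (auto simp: indicator_def intro!: ennreal_leI)
    qed
  next
    case False
    then show ?thesis by simp
  qed
  have "Jq q 1 \<le> (\<integral>\<^sup>+v. ennreal (B * indicator {0..1} v) + ennreal (indicator {1..} v * v powr (-q)) \<partial>lborel)"
    unfolding Jq_def by (intro nn_integral_mono pt)
  also have "\<dots> = (\<integral>\<^sup>+(v::real). ennreal (B * indicator {0..1} v) \<partial>lborel) + (\<integral>\<^sup>+v. ennreal (indicator {1..} v * v powr (-q)) \<partial>lborel)"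
  proof (rule nn_integral_add)
    show "(\<lambda>v::real. ennreal (B * indicator {0..1} v)) \<in> borel_measurable lborel" by measurable
    show "(\<lambda>v. ennreal (indicator {1..} v * v powr (-q))) \<in> borel_measurable lborel" by measurable
  qed
  also have "(\<integral>\<^sup>+(v::real). ennreal (B * indicator {0..1} v) \<partial>lborel) = ennreal B"
    using B by (simp add: ennreal_mult nn_integral_cmult ennreal_indicator)
  also have "(\<integral>\<^sup>+v. ennreal (indicator {1..} v * v powr (-q)) \<partial>lborel) = ennreal (1 / (q - 1))"
    using tail_powr[of 1 q] q by simp
  finally have "Jq q 1 \<le> ennreal (B + 1 / (q - 1))" using B q by (simp add: ennreal_plus)
  then show ?thesis using B q by (intro exI[of _ "B + 1/(q-1)"]) auto
qed



lemma dheat_formula: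
  assumes t: "\<tau> > 0"
  shows "dheat_kernel1 \<xi> \<tau> = - \<xi> / (2 * \<tau>) * heat_kernel1 \<xi> \<tau>"
proof -
  have "((\<lambda>s. heat_kernel1 s \<tau>) has_real_derivative
      (4 * pi * \<tau>) powr (- 1 / 2) * (exp (- \<xi>\<^sup>2 / (4 * \<tau>)) * (- (2 * \<xi>) / (4 * \<tau>)))) (at \<xi>)"
    unfolding heat_kernel1_def using t
    by (auto intro!: derivative_eq_intros simp: power2_eq_square field_simps)
  then have "dheat_kernel1 \<xi> \<tau> = (4 * pi * \<tau>) powr (- 1 / 2) * (exp (- \<xi>\<^sup>2 / (4 * \<tau>)) * (- (2 * \<xi>) / (4 * \<tau>)))"
    unfolding dheat_kernel1_def by (rule DERIV_imp_deriv)
  also have "\<dots> = - \<xi> / (2 * \<tau>) * heat_kernel1 \<xi> \<tau>"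
    unfolding heat_kernel1_def using t by (simp add: field_simps)
  finally show ?thesis .
qed

definition Gk :: "real \<Rightarrow> real \<Rightarrow> real" where
  "Gk a \<tau> = a / (2 * \<tau>) * heat_kernel1 a \<tau>"

lemma Gk_nonneg: "a > 0 \<Longrightarrow> \<tau> > 0 \<Longrightarrow> Gk a \<tau> \<ge> 0"
  unfolding Gk_def heat_kernel1_def by simp

lemma abs_dheat: "a > 0 \<Longrightarrow> \<tau> > 0 \<Longrightarrow> \<bar>dheat_kernel1 a \<tau>\<bar> = Gk a \<tau>"
  using Gk_nonneg[of a \<tau>] unfolding dheat_formula Gk_def
  by (simp add: abs_mult heat_kernel1_def)

definition Jg :: "real \<Rightarrow> real \<Rightarrow> ennreal" where
  "Jg e a = (\<integral>\<^sup>+\<tau>. ennreal (indicator {0<..} \<tau> * \<tau> powr (-e) * Gk a \<tau>) \<partial>lborel)"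

lemma Gk_rewrite:
  assumes t: "\<tau> > 0" and a: "a > 0"
  shows "\<tau> powr (-e) * Gk a \<tau> = (a * (4 * pi) powr (-1/2) / 2) * (\<tau> powr (-(e + 3/2)) * exp (- a\<^sup>2 / (4 * \<tau>)))"
proof -
  have p1: "(4 * pi * \<tau>) powr (-1/2) = (4 * pi) powr (-1/2) * \<tau> powr (-1/2)"
    using t by (simp add: powr_mult)
  have p2: "1 / \<tau> = \<tau> powr (-1)" using t by (simp add: powr_minus_divide)
  have p3: "\<tau> powr (-e) * \<tau> powr (-1) * \<tau> powr (-1/2) = \<tau> powr (-(e + 3/2))"
    by (simp only: powr_add[symmetric]) (rule arg_cong[of _ _ "\<lambda>x. \<tau> powr x"], simp)
  have "\<tau> powr (-e) * Gk a \<tau> = (a * (4 * pi) powr (-1/2) / 2) * ((\<tau> powr (-e) * (1 / \<tau>) * \<tau> powr (-1/2)) * exp (- a\<^sup>2 / (4 * \<tau>)))"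
    unfolding Gk_def heat_kernel1_def p1 by (simp add: field_simps)
  also have "\<dots> = (a * (4 * pi) powr (-1/2) / 2) * (\<tau> powr (-(e + 3/2)) * exp (- a\<^sup>2 / (4 * \<tau>)))"
    unfolding p2 p3 ..
  finally show ?thesis .
qed

lemma Jg_eq:
  assumes a: "a > 0"
  shows "Jg e a = ennreal (a * (4 * pi) powr (-1/2) / 2) * Jq (e + 3/2) a"
proof -
  have "Jg e a = (\<integral>\<^sup>+\<tau>. ennreal (a * (4 * pi) powr (-1/2) / 2) *
      ennreal (indicator {0<..} \<tau> * \<tau> powr (-(e + 3/2)) * exp (- a\<^sup>2 / (4 * \<tau>))) \<partial>lborel)"
    unfolding Jg_def
  proof (rule nn_integral_cong)
    fix \<tau> :: real
    show "ennreal (indicator {0<..} \<tau> * \<tau> powr (-e) * Gk a \<tau>) = ennreal (a * (4 * pi) powr (-1/2) / 2) *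
      ennreal (indicator {0<..} \<tau> * \<tau> powr (-(e + 3/2)) * exp (- a\<^sup>2 / (4 * \<tau>)))"
    proof (cases "\<tau> > 0")
      case True
      have ind: "indicator {0<..} \<tau> = (1::real)" using True by simp
      have "ennreal (indicator {0<..} \<tau> * \<tau> powr (-e) * Gk a \<tau>) = ennreal ((a * (4 * pi) powr (-1/2) / 2) *
        (indicator {0<..} \<tau> * \<tau> powr (-(e + 3/2)) * exp (- a\<^sup>2 / (4 * \<tau>))))"
        unfolding ind mult_1_left by (rule arg_cong[of _ _ ennreal], rule Gk_rewrite[OF True a])
      also have "\<dots> = ennreal (a * (4 * pi) powr (-1/2) / 2) *
        ennreal (indicator {0<..} \<tau> * \<tau> powr (-(e + 3/2)) * exp (- a\<^sup>2 / (4 * \<tau>)))"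
        by (rule ennreal_mult) (use a True in auto)
      finally show ?thesis .
    qed simp
  qed
  also have "\<dots> = ennreal (a * (4 * pi) powr (-1/2) / 2) * Jq (e + 3/2) a"
    unfolding Jq_def by (rule nn_integral_cmult) measurable
  finally show ?thesis .
qed

lemma Jg_bound:
  assumes e: "e \<ge> 0"
  shows "\<exists>C\<ge>0. \<forall>a>0. Jg e a \<le> ennreal (C * a powr (-2 * e))"
proof -
  obtain C where C: "C \<ge> 0" "Jq (e + 3/2) 1 \<le> ennreal C" using Jq_one_finite[of "e + 3/2"] e by auto
  show ?thesis
  proof (intro exI[of _ "(4 * pi) powr (-1/2) / 2 * C"] conjI allI impI)
    show "0 \<le> (4 * pi) powr (-1/2) / 2 * C" using C by simp
    fix a :: real assume a: "a > 0"
    have "Jg e a = ennreal (a * (4 * pi) powr (-1/2) / 2) * (ennreal (a powr (2 - 2 * (e + 3/2))) * Jq (e + 3/2) 1)"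
      using Jg_eq[OF a] Jq_scale[OF a] by simp
    also have "\<dots> = ennreal (a * (4 * pi) powr (-1/2) / 2 * a powr (2 - 2 * (e + 3/2))) * Jq (e + 3/2) 1"
      by (subst ennreal_mult) (use a in \<open>auto simp: mult.assoc\<close>)
    also have "a * (4 * pi) powr (-1/2) / 2 * a powr (2 - 2 * (e + 3/2)) = (4 * pi) powr (-1/2) / 2 * a powr (-2 * e)"
    proof -
      have ex: "2 - 2 * (e + 3/2) = -2 * e - 1" by simp
      have "a powr (-2 * e - 1) = a powr (-2 * e) / a" using a by (simp add: powr_diff)
      then have "a * a powr (2 - 2 * (e + 3/2)) = a powr (-2 * e)" unfolding ex using a by simp
      then show ?thesis by (simp add: field_simps)
    qed
    also have "ennreal ((4 * pi) powr (-1/2) / 2 * a powr (-2 * e)) * Jq (e + 3/2) 1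
        \<le> ennreal ((4 * pi) powr (-1/2) / 2 * a powr (-2 * e)) * ennreal C"
      by (rule mult_left_mono[OF C(2)]) simp
    also have "\<dots> = ennreal ((4 * pi) powr (-1/2) / 2 * C * a powr (-2 * e))"
      by (subst ennreal_mult[symmetric]) (use C in \<open>auto simp: mult_ac\<close>)
    finally show "Jg e a \<le> ennreal ((4 * pi) powr (-1/2) / 2 * C * a powr (-2 * e))" .
  qed
qed

lemma abs_integral_le_nn:
  fixes f :: "'a \<Rightarrow> real"
  shows "ennreal \<bar>integral\<^sup>L M f\<bar> \<le> (\<integral>\<^sup>+x. ennreal \<bar>f x\<bar> \<partial>M)"
proof (cases "integrable M f")
  case True
  then show ?thesis using integral_norm_bound_ennreal[OF True] by simp
next
  case False
  then show ?thesis by (simp add: not_integrable_integral_eq)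
qed

lemma young_bound:
  fixes f :: "'a \<Rightarrow> real" and Kt :: "'a \<Rightarrow> ennreal" and \<psi> :: "'a \<Rightarrow> real"
  assumes p: "1 \<le> p"
    and \<psi>m: "\<psi> \<in> borel_measurable M"
    and \<psi>i: "integrable M (\<lambda>y. \<bar>\<psi> y\<bar> powr p)"
    and Km: "Kt \<in> borel_measurable M"
    and fK: "\<And>y. ennreal \<bar>f y\<bar> \<le> Kt y * ennreal \<bar>\<psi> y\<bar>"
    and Ksup: "\<And>y. Kt y \<le> ennreal (B * l powr p)"
    and Kint: "(\<integral>\<^sup>+y. Kt y \<partial>M) \<le> ennreal m"
    and lam: "l > 0" and B: "B \<ge> 0" and m: "m \<ge> 0"
  shows "\<bar>integral\<^sup>L M f\<bar> \<le> (m + B * (\<integral>y. \<bar>\<psi> y\<bar> powr p \<partial>M)) * l"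
proof -
  let ?A = "\<integral>y. \<bar>\<psi> y\<bar> powr p \<partial>M"
  have A0: "?A \<ge> 0" by simp
  have pt: "Kt y * ennreal \<bar>\<psi> y\<bar> \<le> ennreal l * Kt y + ennreal (B * l) * ennreal (\<bar>\<psi> y\<bar> powr p)" for y
  proof (cases "\<bar>\<psi> y\<bar> \<le> l")
    case True
    have "Kt y * ennreal \<bar>\<psi> y\<bar> \<le> Kt y * ennreal l"
      by (rule mult_left_mono) (use True in \<open>auto intro: ennreal_leI\<close>)
    then show ?thesis by (simp add: mult.commute add_increasing2)
  next
    case False
    then have ps: "\<bar>\<psi> y\<bar> > l" by simp
    have "l powr p * \<bar>\<psi> y\<bar> = l * (l powr (p - 1) * \<bar>\<psi> y\<bar>)"
      using lam by (simp add: powr_diff field_simps)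
    also have "\<dots> \<le> l * (\<bar>\<psi> y\<bar> powr (p - 1) * \<bar>\<psi> y\<bar>)"
      using lam ps p by (intro mult_left_mono mult_right_mono powr_mono2) auto
    also have "\<bar>\<psi> y\<bar> powr (p - 1) * \<bar>\<psi> y\<bar> = \<bar>\<psi> y\<bar> powr p"
      using ps lam by (simp add: powr_diff)
    finally have r: "l powr p * \<bar>\<psi> y\<bar> \<le> l * \<bar>\<psi> y\<bar> powr p" .
    have "Kt y * ennreal \<bar>\<psi> y\<bar> \<le> ennreal (B * l powr p) * ennreal \<bar>\<psi> y\<bar>"
      by (rule mult_right_mono[OF Ksup]) simp
    also have "\<dots> = ennreal (B * (l powr p * \<bar>\<psi> y\<bar>))"
      by (subst ennreal_mult[symmetric]) (use B in \<open>auto simp: mult.assoc\<close>)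
    also have "\<dots> \<le> ennreal (B * (l * \<bar>\<psi> y\<bar> powr p))"
      by (rule ennreal_leI, rule mult_left_mono[OF r B])
    also have "\<dots> = ennreal (B * l) * ennreal (\<bar>\<psi> y\<bar> powr p)"
      by (subst ennreal_mult[symmetric]) (use B lam in \<open>auto simp: mult.assoc\<close>)
    finally show ?thesis by (simp add: add_increasing)
  qed
  have "ennreal \<bar>integral\<^sup>L M f\<bar> \<le> (\<integral>\<^sup>+y. ennreal \<bar>f y\<bar> \<partial>M)"
    by (rule abs_integral_le_nn)
  also have "\<dots> \<le> (\<integral>\<^sup>+y. ennreal l * Kt y + ennreal (B * l) * ennreal (\<bar>\<psi> y\<bar> powr p) \<partial>M)"
    by (intro nn_integral_mono order.trans[OF fK pt])
  also have "\<dots> = ennreal l * (\<integral>\<^sup>+y. Kt y \<partial>M) + ennreal (B * l) * (\<integral>\<^sup>+y. ennreal (\<bar>\<psi> y\<bar> powr p) \<partial>M)"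
    using Km \<psi>m by (simp add: nn_integral_add nn_integral_cmult)
  also have "(\<integral>\<^sup>+y. ennreal (\<bar>\<psi> y\<bar> powr p) \<partial>M) = ennreal ?A"
    by (rule nn_integral_eq_integral[OF \<psi>i]) simp
  also have "ennreal l * (\<integral>\<^sup>+y. Kt y \<partial>M) \<le> ennreal l * ennreal m"
    by (rule mult_left_mono[OF Kint]) simp
  also have "ennreal l * ennreal m + ennreal (B * l) * ennreal ?A = ennreal ((m + B * ?A) * l)"
    using lam B m A0 by (simp add: ennreal_mult[symmetric] ennreal_plus[symmetric] algebra_simps del: ennreal_plus)
  finally show ?thesis
    using lam B m A0 by (simp add: ennreal_le_iff)
qed



lemma heat_kernel_nonneg: "heat_kernel z s \<ge> 0"
  unfolding heat_kernel_def by simp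

lemma heat_kernel_le: "s > 0 \<Longrightarrow> heat_kernel (z::real^'n) s \<le> (4 * pi * s) powr (- real CARD('n) / 2)"
  unfolding heat_kernel_def by (intro mult_left_le) auto

definition Kt :: "real \<Rightarrow> real \<Rightarrow> real^'n \<Rightarrow> real^'n \<Rightarrow> ennreal" where
  "Kt \<sigma> a x' y' = 2 * (\<integral>\<^sup>+\<tau>. ennreal (indicator {0<..} \<tau> * heat_kernel (x' - y') (\<sigma> + \<tau>) * Gk a \<tau>) \<partial>lborel)"

lemma joint_meas:
  "(\<lambda>(y'::real^'n, \<tau>::real). ennreal (indicator {0<..} \<tau> * heat_kernel (x' - y') (\<sigma> + \<tau>) * Gk a \<tau>))
     \<in> borel_measurable (lborel \<Otimes>\<^sub>M lborel)"
  unfolding heat_kernel_def Gk_def heat_kernel1_def by measurable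

lemma Kt_meas: "(\<lambda>y'. Kt \<sigma> a x' y') \<in> borel_measurable lborel"
proof -
  have "(\<lambda>y'. \<integral>\<^sup>+\<tau>. ennreal (indicator {0<..} \<tau> * heat_kernel (x' - y') (\<sigma> + \<tau>) * Gk a \<tau>) \<partial>lborel)
      \<in> borel_measurable lborel"
    using joint_meas[of x' \<sigma> a] by (rule lborel.borel_measurable_nn_integral)
  then show ?thesis unfolding Kt_def by measurable
qed

lemma Phi_le:
  fixes x' y' :: "real^'n"
  assumes a: "xN + 0 + t / \<delta> > 0" and s: "k / \<delta> * t \<ge> 0"
  shows "ennreal \<bar>Phi \<delta> k x' xN y' 0 t\<bar> \<le> Kt (k / \<delta> * t) (xN + 0 + t / \<delta>) x' y'"
proof -
  let ?a = "xN + 0 + t / \<delta>" and ?s = "k / \<delta> * t"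
  let ?f = "\<lambda>\<tau>. indicator {0<..} \<tau> *\<^sub>R (heat_kernel (x' - y') (?s + \<tau>) * dheat_kernel1 ?a \<tau>)"
  have "Phi \<delta> k x' xN y' 0 t = - 2 * integral\<^sup>L lborel ?f"
    unfolding Phi_def set_lebesgue_integral_def by simp
  then have "ennreal \<bar>Phi \<delta> k x' xN y' 0 t\<bar> = 2 * ennreal \<bar>integral\<^sup>L lborel ?f\<bar>"
    by (simp add: abs_mult ennreal_mult)
  also have "\<dots> \<le> 2 * (\<integral>\<^sup>+\<tau>. ennreal \<bar>?f \<tau>\<bar> \<partial>lborel)"
    by (rule mult_left_mono[OF abs_integral_le_nn]) simp
  also have "(\<integral>\<^sup>+\<tau>. ennreal \<bar>?f \<tau>\<bar> \<partial>lborel) =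
      (\<integral>\<^sup>+\<tau>. ennreal (indicator {0<..} \<tau> * heat_kernel (x' - y') (?s + \<tau>) * Gk ?a \<tau>) \<partial>lborel)"
  proof (rule nn_integral_cong)
    fix \<tau> :: real
    show "ennreal \<bar>?f \<tau>\<bar> = ennreal (indicator {0<..} \<tau> * heat_kernel (x' - y') (?s + \<tau>) * Gk ?a \<tau>)"
    proof (cases "\<tau> > 0")
      case True
      then show ?thesis using abs_dheat[OF a True] heat_kernel_nonneg[of "x' - y'" "?s + \<tau>"]
        by (simp add: abs_mult)
    qed simp
  qed
  finally show ?thesis unfolding Kt_def .
qed

lemma Kt_mass:
  fixes x' :: "real^'n"
  assumes s: "\<sigma> \<ge> 0" and a: "a > 0"
  shows "(\<integral>\<^sup>+y'. Kt \<sigma> a x' y' \<partial>lborel) = 2 * Jg 0 a"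
proof -
  have "(\<integral>\<^sup>+y'. Kt \<sigma> a x' y' \<partial>lborel) =
      2 * (\<integral>\<^sup>+y'. (\<integral>\<^sup>+\<tau>. ennreal (indicator {0<..} \<tau> * heat_kernel (x' - y') (\<sigma> + \<tau>) * Gk a \<tau>) \<partial>lborel) \<partial>lborel)"
    unfolding Kt_def
    by (rule nn_integral_cmult) (rule lborel.borel_measurable_nn_integral[OF joint_meas])
  also have "(\<integral>\<^sup>+y'. (\<integral>\<^sup>+\<tau>. ennreal (indicator {0<..} \<tau> * heat_kernel (x' - y') (\<sigma> + \<tau>) * Gk a \<tau>) \<partial>lborel) \<partial>lborel)
     = (\<integral>\<^sup>+\<tau>. (\<integral>\<^sup>+y'. ennreal (indicator {0<..} \<tau> * heat_kernel (x' - y') (\<sigma> + \<tau>) * Gk a \<tau>) \<partial>lborel) \<partial>lborel)"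
    by (rule lborel_pair.Fubini'[symmetric]) (rule joint_meas)
  also have "\<dots> = (\<integral>\<^sup>+\<tau>. ennreal (indicator {0<..} \<tau> * \<tau> powr (-0) * Gk a \<tau>) \<partial>lborel)"
  proof (rule nn_integral_cong)
    fix \<tau> :: real
    show "(\<integral>\<^sup>+y'. ennreal (indicator {0<..} \<tau> * heat_kernel (x' - y') (\<sigma> + \<tau>) * Gk a \<tau>) \<partial>lborel) =
        ennreal (indicator {0<..} \<tau> * \<tau> powr (-0) * Gk a \<tau>)"
    proof (cases "\<tau> > 0")
      case True
      have "(\<integral>\<^sup>+y'. ennreal (indicator {0<..} \<tau> * heat_kernel (x' - y') (\<sigma> + \<tau>) * Gk a \<tau>) \<partial>lborel)
          = (\<integral>\<^sup>+y'. ennreal (Gk a \<tau>) * ennreal (heat_kernel (x' - y') (\<sigma> + \<tau>)) \<partial>lborel)"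
        using True Gk_nonneg[OF a True]
        by (intro nn_integral_cong) (simp add: ennreal_mult[symmetric] heat_kernel_nonneg mult.commute)
      also have "\<dots> = ennreal (Gk a \<tau>) * (\<integral>\<^sup>+y'. ennreal (heat_kernel (x' - y') (\<sigma> + \<tau>)) \<partial>lborel)"
        unfolding heat_kernel_def by (rule nn_integral_cmult) measurable
      also have "(\<integral>\<^sup>+y'. ennreal (heat_kernel (x' - y') (\<sigma> + \<tau>)) \<partial>lborel) = 1"
        by (rule heat_kernel_mass) (use s True in auto)
      finally show ?thesis using True by simp
    qed simp
  qed
  finally show ?thesis unfolding Jg_def by simp
qed

lemma Kt_sup1:
  fixes x' y' :: "real^'n"
  assumes s: "\<sigma> \<ge> 0" and a: "a > 0"
  shows "Kt \<sigma> a x' y' \<le> 2 * (ennreal ((4 * pi) powr (- real CARD('n) / 2)) * Jg (real CARD('n) / 2) a)"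
proof -
  have "(\<integral>\<^sup>+\<tau>. ennreal (indicator {0<..} \<tau> * heat_kernel (x' - y') (\<sigma> + \<tau>) * Gk a \<tau>) \<partial>lborel)
     \<le> (\<integral>\<^sup>+\<tau>. ennreal ((4 * pi) powr (- real CARD('n) / 2)) *
          ennreal (indicator {0<..} \<tau> * \<tau> powr (- (real CARD('n) / 2)) * Gk a \<tau>) \<partial>lborel)"
  proof (rule nn_integral_mono)
    fix \<tau> :: real
    show "ennreal (indicator {0<..} \<tau> * heat_kernel (x' - y') (\<sigma> + \<tau>) * Gk a \<tau>)
      \<le> ennreal ((4 * pi) powr (- real CARD('n) / 2)) *
          ennreal (indicator {0<..} \<tau> * \<tau> powr (- (real CARD('n) / 2)) * Gk a \<tau>)"
    proof (cases "\<tau> > 0")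
      case True
      have "heat_kernel (x' - y') (\<sigma> + \<tau>) \<le> (4 * pi * (\<sigma> + \<tau>)) powr (- real CARD('n) / 2)"
        by (rule heat_kernel_le) (use s True in auto)
      also have "\<dots> \<le> (4 * pi * \<tau>) powr (- real CARD('n) / 2)"
        by (rule powr_mono2') (use s True in auto)
      also have "\<dots> = (4 * pi) powr (- real CARD('n) / 2) * \<tau> powr (- (real CARD('n) / 2))"
        using True by (simp add: powr_mult)
      finally have h: "heat_kernel (x' - y') (\<sigma> + \<tau>) \<le> (4 * pi) powr (- real CARD('n) / 2) * \<tau> powr (- (real CARD('n) / 2))" .
      have "indicator {0<..} \<tau> * heat_kernel (x' - y') (\<sigma> + \<tau>) * Gk a \<tau>
          \<le> (4 * pi) powr (- real CARD('n) / 2) * (indicator {0<..} \<tau> * \<tau> powr (- (real CARD('n) / 2)) * Gk a \<tau>)"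
        using True mult_right_mono[OF h Gk_nonneg[OF a True]] by (simp add: mult.assoc)
      then show ?thesis
        by (subst ennreal_mult[symmetric]) (auto intro: ennreal_leI simp: True Gk_nonneg[OF a True])
    qed simp
  qed
  also have "\<dots> = ennreal ((4 * pi) powr (- real CARD('n) / 2)) * Jg (real CARD('n) / 2) a"
    unfolding Jg_def by (rule nn_integral_cmult) (unfold Gk_def heat_kernel1_def, measurable)
  finally show ?thesis unfolding Kt_def by (rule mult_left_mono) simp
qed

lemma Kt_sup2:
  fixes x' y' :: "real^'n"
  assumes s: "\<sigma> > 0" and a: "a > 0"
  shows "Kt \<sigma> a x' y' \<le> 2 * (ennreal ((4 * pi * \<sigma>) powr (- real CARD('n) / 2)) * Jg 0 a)"
proof -
  have "(\<integral>\<^sup>+\<tau>. ennreal (indicator {0<..} \<tau> * heat_kernel (x' - y') (\<sigma> + \<tau>) * Gk a \<tau>) \<partial>lborel)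
     \<le> (\<integral>\<^sup>+\<tau>. ennreal ((4 * pi * \<sigma>) powr (- real CARD('n) / 2)) *
          ennreal (indicator {0<..} \<tau> * \<tau> powr (- 0) * Gk a \<tau>) \<partial>lborel)"
  proof (rule nn_integral_mono)
    fix \<tau> :: real
    show "ennreal (indicator {0<..} \<tau> * heat_kernel (x' - y') (\<sigma> + \<tau>) * Gk a \<tau>)
      \<le> ennreal ((4 * pi * \<sigma>) powr (- real CARD('n) / 2)) *
          ennreal (indicator {0<..} \<tau> * \<tau> powr (- 0) * Gk a \<tau>)"
    proof (cases "\<tau> > 0")
      case True
      have "heat_kernel (x' - y') (\<sigma> + \<tau>) \<le> (4 * pi * (\<sigma> + \<tau>)) powr (- real CARD('n) / 2)"
        by (rule heat_kernel_le) (use s True in auto)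
      also have "\<dots> \<le> (4 * pi * \<sigma>) powr (- real CARD('n) / 2)"
        by (rule powr_mono2') (use s True in auto)
      finally have h: "heat_kernel (x' - y') (\<sigma> + \<tau>) \<le> (4 * pi * \<sigma>) powr (- real CARD('n) / 2)" .
      have "indicator {0<..} \<tau> * heat_kernel (x' - y') (\<sigma> + \<tau>) * Gk a \<tau>
          \<le> (4 * pi * \<sigma>) powr (- real CARD('n) / 2) * (indicator {0<..} \<tau> * \<tau> powr (- 0) * Gk a \<tau>)"
        using True h Gk_nonneg[OF a True] by (simp add: mult_right_mono)
      then show ?thesis
        by (subst ennreal_mult[symmetric]) (auto intro: ennreal_leI simp: True Gk_nonneg[OF a True])
    qed simp
  qed
  also have "\<dots> = ennreal ((4 * pi * \<sigma>) powr (- real CARD('n) / 2)) * Jg 0 a"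
    unfolding Jg_def by (rule nn_integral_cmult) (unfold Gk_def heat_kernel1_def, measurable)
  finally show ?thesis unfolding Kt_def by (rule mult_left_mono) simp
qed



lemma half_line:
  fixes s r :: real assumes s: "s > 0" and r: "r > 1"
  shows "(\<integral>\<^sup>+u. ennreal (indicator {0..} u * (u + s) powr (-r)) \<partial>lborel) = ennreal (s powr (1-r) / (r-1))"
proof -
  have "(\<integral>\<^sup>+v. ennreal (indicator {s..} v * v powr (-r)) \<partial>lborel)
      = ennreal \<bar>1\<bar> * (\<integral>\<^sup>+u. ennreal (indicator {s..} (s + 1 * u) * (s + 1 * u) powr (-r)) \<partial>lborel)"
    by (rule nn_integral_real_affine) auto
  also have "\<dots> = (\<integral>\<^sup>+u. ennreal (indicator {0..} u * (u + s) powr (-r)) \<partial>lborel)"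
    by (auto intro!: nn_integral_cong simp: indicator_def add.commute)
  finally show ?thesis using tail_powr[OF s r] by simp
qed

lemma line_1d:
  fixes s r c :: real assumes s: "s > 0" and r: "r > 1"
  shows "(\<integral>\<^sup>+u. ennreal ((\<bar>c - u\<bar> + s) powr (-r)) \<partial>lborel) \<le> ennreal (2 * (s powr (1-r) / (r-1)))"
proof -
  have "(\<integral>\<^sup>+u. ennreal ((\<bar>c - u\<bar> + s) powr (-r)) \<partial>lborel)
      = ennreal \<bar>-1\<bar> * (\<integral>\<^sup>+u. ennreal ((\<bar>c - (c + (-1) * u)\<bar> + s) powr (-r)) \<partial>lborel)"
    by (rule nn_integral_real_affine) auto
  also have "\<dots> = (\<integral>\<^sup>+u. ennreal ((\<bar>u\<bar> + s) powr (-r)) \<partial>lborel)" by simp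
  also have "\<dots> \<le> (\<integral>\<^sup>+u. ennreal (indicator {0..} u * (u + s) powr (-r)) + ennreal (indicator {0..} (0 + (-1) * u) * ((0 + (-1) * u) + s) powr (-r)) \<partial>lborel)"
  proof (rule nn_integral_mono)
    fix u :: real
    show "ennreal ((\<bar>u\<bar> + s) powr (-r)) \<le> ennreal (indicator {0..} u * (u + s) powr (-r)) + ennreal (indicator {0..} (0 + (-1) * u) * ((0 + (-1) * u) + s) powr (-r))"
    proof (cases "u \<ge> 0")
      case True
      then show ?thesis by (intro add_increasing2) (auto simp: indicator_def)
    next
      case False
      then show ?thesis by (intro add_increasing) (auto simp: indicator_def)
    qed
  qed
  also have "\<dots> = (\<integral>\<^sup>+u. ennreal (indicator {0..} u * (u + s) powr (-r)) \<partial>lborel) + (\<integral>\<^sup>+u. ennreal (indicator {0..} (0 + (-1) * u) * ((0 + (-1) * u) + s) powr (-r)) \<partial>lborel)"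
    by (rule nn_integral_add) measurable
  also have "(\<integral>\<^sup>+u. ennreal (indicator {0..} (0 + (-1) * u) * ((0 + (-1) * u) + s) powr (-r)) \<partial>lborel)
      = (\<integral>\<^sup>+u. ennreal (indicator {0..} u * (u + s) powr (-r)) \<partial>lborel)"
  proof -
    have "(\<integral>\<^sup>+u. ennreal (indicator {0..} u * (u + s) powr (-r)) \<partial>lborel)
      = ennreal \<bar>-1\<bar> * (\<integral>\<^sup>+u. ennreal (indicator {0..} (0 + (-1) * u) * ((0 + (-1) * u) + s) powr (-r)) \<partial>lborel)"
      by (rule nn_integral_real_affine) auto
    then show ?thesis by simp
  qed
  also have "(\<integral>\<^sup>+u. ennreal (indicator {0..} u * (u + s) powr (-r)) \<partial>lborel) = ennreal (s powr (1-r) / (r-1))"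
    by (rule half_line[OF s r])
  finally show ?thesis using s r by (simp add: ennreal_plus[symmetric] del: ennreal_plus)
qed

lemma cN_pos: "cN (TYPE('n::finite)) > 0"
  unfolding cN_def by (simp add: Gamma_real_pos)

lemma poisson_pointwise:
  fixes z :: "real^'n" assumes s: "s > 0"
  shows "\<bar>poisson z s\<bar> \<le> cN TYPE('n) * 2 ^ (CARD('n) + 1) * s *
           (\<Prod>b\<in>Basis. (\<bar>z \<bullet> b\<bar> + s) powr (- ((real CARD('n) + 1) / real CARD('n))))"
proof -
  define d where "d = real CARD('n)"
  define r where "r = (d + 1) / d"
  define R where "R = sqrt ((norm z)\<^sup>2 + s\<^sup>2)"
  have d0: "d > 0" unfolding d_def by simp
  have Rs: "s \<le> R" unfolding R_def using s by (simp add: real_le_rsqrt)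
  have Rz: "norm z \<le> R" unfolding R_def by (simp add: real_le_rsqrt)
  have R0: "R > 0" using Rs s by simp
  have cb: "\<And>b. b \<in> Basis \<Longrightarrow> \<bar>z \<bullet> b\<bar> + s \<le> 2 * R"
    using Basis_le_norm Rz Rs by (smt (verit))
  have "(\<Prod>b\<in>(Basis::(real^'n) set). (\<bar>z \<bullet> b\<bar> + s) powr r) \<le> (\<Prod>b\<in>(Basis::(real^'n) set). (2 * R) powr r)"
  proof (rule prod_mono)
    fix b :: "real^'n" assume b: "b \<in> Basis"
    have r0: "0 \<le> r" unfolding r_def using d0 by simp
    show "0 \<le> (\<bar>z \<bullet> b\<bar> + s) powr r \<and> (\<bar>z \<bullet> b\<bar> + s) powr r \<le> (2 * R) powr r"
      using powr_mono2[OF r0 _ cb[OF b]] s by simp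
  qed
  also have "\<dots> = ((2 * R) powr r) ^ CARD('n)" by simp
  also have "\<dots> = (2 * R) powr (r * d)" unfolding d_def using R0 by (simp add: powr_realpow[symmetric] powr_powr)
  also have "r * d = d + 1" unfolding r_def using d0 by simp
  also have "(2 * R) powr (d + 1) = (2 * R) ^ (CARD('n) + 1)" unfolding d_def using R0
    by (metis of_nat_Suc Suc_eq_plus1 add.commute powr_realpow mult_pos_pos zero_less_numeral)
  finally have P: "(\<Prod>b\<in>(Basis::(real^'n) set). (\<bar>z \<bullet> b\<bar> + s) powr r) \<le> (2 * R) ^ (CARD('n) + 1)" .
  have Ppos: "(\<Prod>b\<in>(Basis::(real^'n) set). (\<bar>z \<bullet> b\<bar> + s) powr r) > 0"
    using s by (intro prod_pos) auto
  have inv: "(\<Prod>b\<in>(Basis::(real^'n) set). (\<bar>z \<bullet> b\<bar> + s) powr (-r)) = 1 / (\<Prod>b\<in>(Basis::(real^'n) set). (\<bar>z \<bullet> b\<bar> + s) powr r)"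
    using s by (simp add: powr_minus prod_inversef[symmetric] divide_inverse)
  have "poisson z s = cN TYPE('n) * s / R ^ (CARD('n) + 1)"
    unfolding poisson_def R_def ..
  also have "\<dots> = cN TYPE('n) * 2 ^ (CARD('n) + 1) * s / (2 * R) ^ (CARD('n) + 1)"
    by (simp add: power_mult_distrib)
  also have "\<dots> \<le> cN TYPE('n) * 2 ^ (CARD('n) + 1) * s / (\<Prod>b\<in>(Basis::(real^'n) set). (\<bar>z \<bullet> b\<bar> + s) powr r)"
    using cN_pos[where 'n='n] s Ppos P R0 by (intro divide_left_mono) auto
  finally have "poisson z s \<le> cN TYPE('n) * 2 ^ (CARD('n) + 1) * s * (\<Prod>b\<in>Basis. (\<bar>z \<bullet> b\<bar> + s) powr (-r))"
    unfolding inv by simp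
  moreover have "poisson z s \<ge> 0"
    unfolding poisson_def using cN_pos[where 'n='n] s by simp
  ultimately show ?thesis unfolding r_def d_def by simp
qed

lemma poisson_mass:
  fixes x' :: "real^'n" assumes s: "s > 0"
  shows "(\<integral>\<^sup>+y'. ennreal \<bar>poisson (x' - y') s\<bar> \<partial>lborel)
     \<le> ennreal (cN TYPE('n) * 2 ^ (CARD('n) + 1) * (2 * real CARD('n)) ^ CARD('n))"
proof -
  define d where "d = real CARD('n)"
  define r where "r = (d + 1) / d"
  have d0: "d > 0" unfolding d_def by simp
  have r1: "r > 1" unfolding r_def using d0 by simp
  define K where "K = cN TYPE('n) * 2 ^ (CARD('n) + 1) * s"
  have K0: "K \<ge> 0" unfolding K_def using cN_pos[where 'n='n] s by simp
  have "(\<integral>\<^sup>+y'. ennreal \<bar>poisson (x' - y') s\<bar> \<partial>lborel)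
      \<le> (\<integral>\<^sup>+y'. ennreal K * (\<Prod>b\<in>Basis. ennreal ((\<bar>x' \<bullet> b - y' \<bullet> b\<bar> + s) powr (-r))) \<partial>lborel)"
  proof (rule nn_integral_mono)
    fix y' :: "real^'n"
    have "\<bar>poisson (x' - y') s\<bar> \<le> K * (\<Prod>b\<in>Basis. (\<bar>x' \<bullet> b - y' \<bullet> b\<bar> + s) powr (-r))"
      using poisson_pointwise[OF s, of "x' - y'"] unfolding K_def r_def d_def by (simp add: inner_diff_left)
    then have "ennreal \<bar>poisson (x' - y') s\<bar> \<le> ennreal (K * (\<Prod>b\<in>Basis. (\<bar>x' \<bullet> b - y' \<bullet> b\<bar> + s) powr (-r)))"
      by (rule ennreal_leI)
    also have "\<dots> = ennreal K * ennreal (\<Prod>b\<in>Basis. (\<bar>x' \<bullet> b - y' \<bullet> b\<bar> + s) powr (-r))"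
      by (rule ennreal_mult) (use K0 in \<open>auto intro: prod_nonneg\<close>)
    finally show "ennreal \<bar>poisson (x' - y') s\<bar> \<le> ennreal K * (\<Prod>b\<in>Basis. ennreal ((\<bar>x' \<bullet> b - y' \<bullet> b\<bar> + s) powr (-r)))"
      by (simp add: prod_ennreal)
  qed
  also have "\<dots> = ennreal K * (\<integral>\<^sup>+y'. (\<Prod>b\<in>Basis. ennreal ((\<bar>x' \<bullet> b - y' \<bullet> b\<bar> + s) powr (-r))) \<partial>lborel)"
    by (rule nn_integral_cmult) measurable
  also have "(\<integral>\<^sup>+y'. (\<Prod>b\<in>Basis. ennreal ((\<bar>x' \<bullet> b - y' \<bullet> b\<bar> + s) powr (-r))) \<partial>lborel)
      = (\<Prod>b\<in>(Basis::(real^'n) set). (\<integral>\<^sup>+u. ennreal ((\<bar>x' \<bullet> b - u\<bar> + s) powr (-r)) \<partial>lborel))"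
    by (rule nn_integral_lborel_prod) auto
  also have "\<dots> \<le> (\<Prod>b\<in>(Basis::(real^'n) set). ennreal (2 * (s powr (1-r) / (r-1))))"
    by (rule prod_mono_ennreal) (use line_1d[OF s r1] in auto)
  also have "\<dots> = ennreal ((2 * (s powr (1-r) / (r-1))) ^ CARD('n))"
    using s r1 by (simp add: ennreal_power)
  also have "ennreal K * ennreal ((2 * (s powr (1-r) / (r-1))) ^ CARD('n))
      = ennreal (cN TYPE('n) * 2 ^ (CARD('n) + 1) * (2 * real CARD('n)) ^ CARD('n))"
  proof -
    have "r - 1 = 1 / d" unfolding r_def using d0 by (simp add: field_simps)
    then have e1: "2 * (s powr (1-r) / (r-1)) = 2 * d * s powr (1-r)" by simp
    have "(s powr (1-r)) ^ CARD('n) = s powr ((1-r) * d)"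
      unfolding d_def using s by (simp add: powr_realpow[symmetric] powr_powr)
    also have "(1-r) * d = -1" unfolding r_def using d0 by (simp add: field_simps)
    finally have e2: "(s powr (1-r)) ^ CARD('n) = 1 / s" using s by (simp add: powr_minus_divide)
    have "K * (2 * (s powr (1-r) / (r-1))) ^ CARD('n) = cN TYPE('n) * 2 ^ (CARD('n) + 1) * (2 * d) ^ CARD('n)"
      unfolding e1 K_def power_mult_distrib[of "2 * d"] e2 using s by simp
    then show ?thesis using K0 s r1 unfolding d_def by (simp add: ennreal_mult[symmetric])
  qed
  finally show ?thesis using K0 by (simp add: mult_left_mono)
qed



lemma enn_chain:
  assumes "K \<le> 2 * (ennreal c * J)" "J \<le> ennreal X" "c \<ge> 0" "X \<ge> 0"
  shows "K \<le> ennreal (2 * c * X)"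
proof -
  have "2 * (ennreal c * J) \<le> 2 * (ennreal c * ennreal X)"
    by (intro mult_left_mono assms(2)) auto
  also have "\<dots> = ennreal (2 * c * X)"
    using assms(3,4) by (simp add: ennreal_mult mult.assoc)
  finally show ?thesis using assms(1) by simp
qed

lemma fK_lemma:
  assumes "ennreal \<bar>g\<bar> \<le> K"
  shows "ennreal \<bar>g * h\<bar> \<le> K * ennreal \<bar>h\<bar>"
proof -
  have "ennreal \<bar>g * h\<bar> = ennreal \<bar>g\<bar> * ennreal \<bar>h\<bar>" by (simp add: abs_mult ennreal_mult)
  also have "\<dots> \<le> K * ennreal \<bar>h\<bar>" by (rule mult_right_mono[OF assms]) simp
  finally show ?thesis .
qed

lemma poisson_sup:
  fixes z :: "real^'n" assumes s: "s > 0"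
  shows "\<bar>poisson z s\<bar> \<le> cN TYPE('n) * s powr (- real CARD('n))"
proof -
  define R where "R = sqrt ((norm z)\<^sup>2 + s\<^sup>2)"
  have Rs: "s \<le> R" unfolding R_def using s by (simp add: real_le_rsqrt)
  have "poisson z s = cN TYPE('n) * s / R ^ (CARD('n) + 1)"
    unfolding poisson_def R_def ..
  also have "\<dots> \<le> cN TYPE('n) * s / s ^ (CARD('n) + 1)"
    using cN_pos[where 'n='n] s Rs by (intro divide_left_mono power_mono mult_pos_pos) auto
  also have "\<dots> = cN TYPE('n) * s powr (- real CARD('n))"
    using s by (simp add: powr_minus_divide powr_realpow divide_simps)
  finally have "poisson z s \<le> cN TYPE('n) * s powr (- real CARD('n))" .
  moreover have "poisson z s \<ge> 0"
    unfolding poisson_def using cN_pos[where 'n='n] s by simp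
  ultimately show ?thesis by simp
qed

lemma powr_neg_bound:
  fixes u a e :: real assumes "0 < u" "u \<le> a" "e \<ge> 0"
  shows "a powr (- e) \<le> u powr (- e)"
  by (rule powr_mono2') (use assms in auto)

theorem theorem4p2:
  fixes \<psi> :: "real^'n \<Rightarrow> real" and p T :: real
  assumes "1 \<le> p"
    and "\<psi> \<in> borel_measurable lborel"
    and "integrable lborel (\<lambda>y. \<bar>\<psi> y\<bar> powr p)"
    and "T > 0"
  shows "(\<forall>k>0. \<exists>C. \<forall>\<^sub>F \<delta> in at_right 0.
            \<forall>x' xN t. xN > 0 \<longrightarrow> t > T \<longrightarrow>
              \<bar>v_fun \<delta> k \<psi> x' xN t\<bar> \<le> C * \<delta> powr (real CARD('n) / p))
       \<and> (\<exists>C. \<forall>\<^sub>F \<delta> in at_right 0.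
            \<forall>x' xN t. xN > 0 \<longrightarrow> t > T \<longrightarrow>
              \<bar>w_fun \<delta> \<psi> x' xN t\<bar> \<le> C * \<delta> powr (real CARD('n) / p))
       \<and> (\<forall>\<delta>>0. \<exists>C. \<forall>\<^sub>F k in at_top.
            \<forall>x' xN t. xN > 0 \<longrightarrow> t > T \<longrightarrow>
              \<bar>v_fun \<delta> k \<psi> x' xN t\<bar> \<le> C * k powr (- real CARD('n) / (2 * p)))"
proof -
  note p = assms(1) and \<psi>m = assms(2) and \<psi>i = assms(3) and T = assms(4)
  define d where "d = real CARD('n)"
  have d0: "d > 0" unfolding d_def by simp
  define A where "A = (\<integral>y. \<bar>\<psi> y\<bar> powr p \<partial>lborel)"
  have A0: "A \<ge> 0" unfolding A_def by simp
  obtain C0 where C0: "C0 \<ge> 0" "\<And>a. a > 0 \<Longrightarrow> Jg 0 a \<le> ennreal (C0 * a powr (-2 * 0))"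
    using Jg_bound[of 0] by auto
  have C0': "Jg 0 a \<le> ennreal C0" if "a > 0" for a using C0(2)[OF that] that by simp
  obtain Cd where Cd: "Cd \<ge> 0" "\<And>a. a > 0 \<Longrightarrow> Jg (d / 2) a \<le> ennreal (Cd * a powr (-2 * (d / 2)))"
    using Jg_bound[of "d / 2"] d0 by auto
  have p0: "p > 0" using p by simp

  have part1: "\<exists>C. \<forall>\<^sub>F \<delta> in at_right 0.
            \<forall>x' xN t. xN > 0 \<longrightarrow> t > T \<longrightarrow>
              \<bar>v_fun \<delta> k \<psi> x' xN t\<bar> \<le> C * \<delta> powr (real CARD('n) / p)" if k: "k > 0" for k
  proof -
    define B1 where "B1 = 2 * (4 * pi) powr (- d / 2) * Cd * T powr (- d)"
    have B1: "B1 \<ge> 0" unfolding B1_def using Cd by simp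
    show ?thesis
    proof (intro exI[of _ "2 * C0 + B1 * A"] eventually_mono[OF eventually_at_right_less] allI impI)
      fix \<delta> :: real and x' :: "real^'n" and xN t :: real
      assume \<delta>: "0 < \<delta>" and xN: "xN > 0" and t: "t > T"
      define a where "a = xN + 0 + t / \<delta>"
      define \<sigma> where "\<sigma> = k / \<delta> * t"
      define l where "l = \<delta> powr (d / p)"
      have tT: "T / \<delta> < t / \<delta>" using t \<delta> by (simp add: divide_strict_right_mono)
      have aT: "T / \<delta> \<le> a" unfolding a_def using tT xN by simp
      have a0: "a > 0" using aT T \<delta> by (smt (verit) divide_pos_pos)
      have \<sigma>0: "\<sigma> > 0" unfolding \<sigma>_def using k \<delta> t T by simp
      have l0: "l > 0" unfolding l_def using \<delta> by simp
      have lp: "l powr p = \<delta> powr d" unfolding l_def using p0 by (simp add: powr_powr)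
      have "\<bar>integral\<^sup>L lborel (\<lambda>y'. Phi \<delta> k x' xN y' 0 t * \<psi> y')\<bar> \<le> (2 * C0 + B1 * A) * l"
        unfolding A_def
      proof (rule young_bound[OF p \<psi>m \<psi>i Kt_meas[of \<sigma> a x']])
        show "ennreal \<bar>Phi \<delta> k x' xN y' 0 t * \<psi> y'\<bar> \<le> Kt \<sigma> a x' y' * ennreal \<bar>\<psi> y'\<bar>" for y'
          by (rule fK_lemma) (unfold \<sigma>_def a_def, rule Phi_le, use a0 \<sigma>0 in \<open>auto simp: a_def \<sigma>_def\<close>)
        show "Kt \<sigma> a x' y' \<le> ennreal (B1 * l powr p)" for y'
        proof -
          have "Kt \<sigma> a x' y' \<le> ennreal (2 * (4 * pi) powr (- d / 2) * (Cd * a powr (-2 * (d / 2))))"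
          proof -
            have ks: "Kt \<sigma> a x' y' \<le> 2 * (ennreal ((4 * pi) powr (- d / 2)) * Jg (d / 2) a)"
              using Kt_sup1[of \<sigma> a x' y'] \<sigma>0 a0 unfolding d_def by simp
            show ?thesis
              by (rule enn_chain[OF ks Cd(2)[OF a0]]) (use Cd in auto)
          qed
          also have "\<dots> \<le> ennreal (B1 * l powr p)"
          proof (rule ennreal_leI)
            have "a powr (- d) \<le> (T / \<delta>) powr (- d)"
              by (rule powr_neg_bound) (use T \<delta> aT d0 in auto)
            also have "(T / \<delta>) powr (- d) = T powr (- d) * \<delta> powr d"
              using T \<delta> by (simp add: powr_divide powr_minus divide_simps)
            finally have "a powr (- d) \<le> T powr (- d) * \<delta> powr d" .
            then have "2 * (4 * pi) powr (- d / 2) * Cd * a powr (- d) \<le> 2 * (4 * pi) powr (- d / 2) * Cd * (T powr (- d) * \<delta> powr d)"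
              using Cd by (intro mult_left_mono) auto
            then show "2 * (4 * pi) powr (- d / 2) * (Cd * a powr (-2 * (d / 2))) \<le> B1 * l powr p"
              unfolding lp B1_def by (simp add: mult_ac)
          qed
          finally show ?thesis .
        qed
        show "(\<integral>\<^sup>+y'. Kt \<sigma> a x' y' \<partial>lborel) \<le> ennreal (2 * C0)"
          using Kt_mass[of \<sigma> a x'] \<sigma>0 a0 C0'[OF a0] C0
          by (simp add: ennreal_mult mult_left_mono)
      qed (use l0 B1 C0 in auto)
      then show "\<bar>v_fun \<delta> k \<psi> x' xN t\<bar> \<le> (2 * C0 + B1 * A) * \<delta> powr (real CARD('n) / p)"
        unfolding v_fun_def l_def d_def .
    qed
  qed

  have part3: "\<exists>C. \<forall>\<^sub>F k in at_top.
            \<forall>x' xN t. xN > 0 \<longrightarrow> t > T \<longrightarrow>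
              \<bar>v_fun \<delta> k \<psi> x' xN t\<bar> \<le> C * k powr (- real CARD('n) / (2 * p))" if \<delta>: "\<delta> > 0" for \<delta>
  proof -
    define B3 where "B3 = 2 * (4 * pi * T / \<delta>) powr (- d / 2) * C0"
    have B3: "B3 \<ge> 0" unfolding B3_def using C0 by simp
    show ?thesis
    proof (intro exI[of _ "2 * C0 + B3 * A"] eventually_mono[OF eventually_gt_at_top[of 0]] allI impI)
      fix k :: real and x' :: "real^'n" and xN t :: real
      assume k: "0 < k" and xN: "xN > 0" and t: "t > T"
      define a where "a = xN + 0 + t / \<delta>"
      define \<sigma> where "\<sigma> = k / \<delta> * t"
      define l where "l = k powr (- d / (2 * p))"
      have a0: "a > 0" unfolding a_def using xN t T \<delta> by (smt (verit) divide_pos_pos)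
      have \<sigma>0: "\<sigma> > 0" unfolding \<sigma>_def using k \<delta> t T by simp
      have \<sigma>T: "k * T / \<delta> \<le> \<sigma>" unfolding \<sigma>_def using k \<delta> t
        by (simp add: divide_right_mono)
      have l0: "l > 0" unfolding l_def using k by simp
      have lp: "l powr p = k powr (- d / 2)" unfolding l_def using p0 by (simp add: powr_powr)
      have "\<bar>integral\<^sup>L lborel (\<lambda>y'. Phi \<delta> k x' xN y' 0 t * \<psi> y')\<bar> \<le> (2 * C0 + B3 * A) * l"
        unfolding A_def
      proof (rule young_bound[OF p \<psi>m \<psi>i Kt_meas[of \<sigma> a x']])
        show "ennreal \<bar>Phi \<delta> k x' xN y' 0 t * \<psi> y'\<bar> \<le> Kt \<sigma> a x' y' * ennreal \<bar>\<psi> y'\<bar>" for y'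
          by (rule fK_lemma) (unfold \<sigma>_def a_def, rule Phi_le, use a0 \<sigma>0 in \<open>auto simp: a_def \<sigma>_def\<close>)
        show "Kt \<sigma> a x' y' \<le> ennreal (B3 * l powr p)" for y'
        proof -
          have "Kt \<sigma> a x' y' \<le> ennreal (2 * (4 * pi * \<sigma>) powr (- d / 2) * C0)"
          proof -
            have ks: "Kt \<sigma> a x' y' \<le> 2 * (ennreal ((4 * pi * \<sigma>) powr (- d / 2)) * Jg 0 a)"
              using Kt_sup2[OF \<sigma>0 a0, of x' y'] unfolding d_def by simp
            show ?thesis
              using enn_chain[OF ks C0'[OF a0]] C0 by (simp add: mult_ac)
          qed
          also have "\<dots> \<le> ennreal (B3 * l powr p)"
          proof (rule ennreal_leI)
            have "(4 * pi * \<sigma>) powr (- d / 2) \<le> (4 * pi * (k * T / \<delta>)) powr (- d / 2)"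
            proof -
              have h: "4 * pi * (k * T / \<delta>) \<le> 4 * pi * \<sigma>" using mult_left_mono[OF \<sigma>T, of "4 * pi"] by simp
              have "(4 * pi * \<sigma>) powr (- (d / 2)) \<le> (4 * pi * (k * T / \<delta>)) powr (- (d / 2))"
                by (rule powr_neg_bound[OF _ h]) (use k T \<delta> d0 in auto)
              then show ?thesis by simp
            qed
            also have "(4 * pi * (k * T / \<delta>)) = (4 * pi * T / \<delta>) * k" by simp
            also have "((4 * pi * T / \<delta>) * k) powr (- d / 2) = (4 * pi * T / \<delta>) powr (- d / 2) * k powr (- d / 2)"
              by (rule powr_mult)
            finally have "(4 * pi * \<sigma>) powr (- d / 2) \<le> (4 * pi * T / \<delta>) powr (- d / 2) * k powr (- d / 2)" .
            then have "2 * (4 * pi * \<sigma>) powr (- d / 2) * C0 \<le> 2 * ((4 * pi * T / \<delta>) powr (- d / 2) * k powr (- d / 2)) * C0"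
              using C0 by (intro mult_right_mono) auto
            then show "2 * (4 * pi * \<sigma>) powr (- d / 2) * C0 \<le> B3 * l powr p"
              unfolding lp B3_def by (simp add: mult_ac)
          qed
          finally show ?thesis .
        qed
        show "(\<integral>\<^sup>+y'. Kt \<sigma> a x' y' \<partial>lborel) \<le> ennreal (2 * C0)"
          using Kt_mass[of \<sigma> a x'] \<sigma>0 a0 C0'[OF a0] C0
          by (simp add: ennreal_mult mult_left_mono)
      qed (use l0 B3 C0 in auto)
      then show "\<bar>v_fun \<delta> k \<psi> x' xN t\<bar> \<le> (2 * C0 + B3 * A) * k powr (- real CARD('n) / (2 * p))"
        unfolding v_fun_def l_def d_def .
    qed
  qed

  have part2: "\<exists>C. \<forall>\<^sub>F \<delta> in at_right 0.
            \<forall>x' xN t. xN > 0 \<longrightarrow> t > T \<longrightarrow>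
              \<bar>w_fun \<delta> \<psi> x' xN t\<bar> \<le> C * \<delta> powr (real CARD('n) / p)"
  proof -
    define M2 where "M2 = cN TYPE('n) * 2 ^ (CARD('n) + 1) * (2 * real CARD('n)) ^ CARD('n)"
    define B2 where "B2 = cN TYPE('n) * T powr (- d)"
    have B2: "B2 \<ge> 0" unfolding B2_def using cN_pos[where 'n='n] by simp
    have M2: "M2 \<ge> 0" unfolding M2_def using cN_pos[where 'n='n] by simp
    show ?thesis
    proof (intro exI[of _ "M2 + B2 * A"] eventually_mono[OF eventually_at_right_less] allI impI)
      fix \<delta> :: real and x' :: "real^'n" and xN t :: real
      assume \<delta>: "0 < \<delta>" and xN: "xN > 0" and t: "t > T"
      define s where "s = xN + t / \<delta>"
      define l where "l = \<delta> powr (d / p)"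
      have tT: "T / \<delta> < t / \<delta>" using t \<delta> by (simp add: divide_strict_right_mono)
      have sT: "T / \<delta> \<le> s" unfolding s_def using tT xN by simp
      have s0: "s > 0" using sT T \<delta> by (smt (verit) divide_pos_pos)
      have l0: "l > 0" unfolding l_def using \<delta> by simp
      have lp: "l powr p = \<delta> powr d" unfolding l_def using p0 by (simp add: powr_powr)
      have meas: "(\<lambda>y'. ennreal \<bar>poisson (x' - y') s\<bar>) \<in> borel_measurable lborel"
        unfolding poisson_def by measurable
      have "\<bar>integral\<^sup>L lborel (\<lambda>y'. poisson (x' - y') s * \<psi> y')\<bar> \<le> (M2 + B2 * A) * l"
        unfolding A_def
      proof (rule young_bound[OF p \<psi>m \<psi>i meas])
        show "ennreal \<bar>poisson (x' - y') s * \<psi> y'\<bar> \<le> ennreal \<bar>poisson (x' - y') s\<bar> * ennreal \<bar>\<psi> y'\<bar>" for y'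
          by (rule fK_lemma) simp
        show "ennreal \<bar>poisson (x' - y') s\<bar> \<le> ennreal (B2 * l powr p)" for y'
        proof (rule ennreal_leI)
          have "\<bar>poisson (x' - y') s\<bar> \<le> cN TYPE('n) * s powr (- d)"
            using poisson_sup[OF s0, of "x' - y'"] unfolding d_def .
          also have "s powr (- d) \<le> (T / \<delta>) powr (- d)"
            by (rule powr_neg_bound) (use T \<delta> sT d0 in auto)
          also have "(T / \<delta>) powr (- d) = T powr (- d) * \<delta> powr d"
            using T \<delta> by (simp add: powr_divide powr_minus divide_simps)
          finally show "\<bar>poisson (x' - y') s\<bar> \<le> B2 * l powr p"
            unfolding lp B2_def using cN_pos[where 'n='n] by (simp add: mult_ac)
        qed
        show "(\<integral>\<^sup>+y'. ennreal \<bar>poisson (x' - y') s\<bar> \<partial>lborel) \<le> ennreal M2"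
          unfolding M2_def by (rule poisson_mass[OF s0])
      qed (use l0 B2 M2 in auto)
      then show "\<bar>w_fun \<delta> \<psi> x' xN t\<bar> \<le> (M2 + B2 * A) * \<delta> powr (real CARD('n) / p)"
        unfolding w_fun_def l_def d_def s_def .
    qed
  qed
  show ?thesis using part1 part2 part3 by blast
qed

end
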